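(* Let $\sigma_0,\sigma_\epsilon>0$, $\theta_0\in\mathbb{R}$, prior $\Theta\sim N(\theta_0,\sigma_0^2)$, signal $X=\Theta+\epsilon$ with $\epsilon\sim\mathrm{Cauchy}(0,\sigma_\epsilon)$ independent of $\Theta$, and let $\theta_1(x)=\mathbb{E}[\Theta\mid X=x]$. With $a=\sigma_\epsilon/\sigma_0$, the DeGroot coefficient $\omega=\frac{d\theta_1}{dx}\big|_{x=\theta_0}$ is $$\omega=1+a^2-\sqrt{\frac{2}{\pi}}\,\frac{a}{\operatorname{erfcx}(a/\sqrt2)},$$ where $\operatorname{erfcx}(y)=e^{y^2}\bigl(1-\frac{2}{\sqrt\pi}\int_0^y e^{-t^2}dt\bigr)$.
   Context: $\mathrm{Cauchy}(\mu,s)$ has density $t\mapsto\frac{1}{\pi s[1+((t-\mu)/s)^2]}$. The posterior mean is $\theta_1(x)=\frac{\int\theta f_\Theta(\theta)l_\epsilon(x-\theta)d\theta}{\int f_\Theta(\theta)l_\epsilon(x-\theta)d\theta}$. The DeGroot coefficient is the slope of the posterior mean in the signal at $x=\theta_0$ (local linearization $\theta_1\approx\theta_0+\omega(x-\theta_0)$). *)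

theory Defs
  imports "HOL-Probability.Probability"
begin

definition cauchy_density :: "real \<Rightarrow> real \<Rightarrow> real \<Rightarrow> real" where
  "cauchy_density \<mu> s t = 1 / (pi * s * (1 + ((t - \<mu>) / s)^2))"

text \<open>Posterior mean of Theta given X = x, for prior density f and noise density l
  (signal X = Theta + eps).\<close>
definition posterior_mean :: "(real \<Rightarrow> real) \<Rightarrow> (real \<Rightarrow> real) \<Rightarrow> real \<Rightarrow> real" where
  "posterior_mean f l x =
     (\<integral>\<theta>. \<theta> * f \<theta> * l (x - \<theta>) \<partial>lborel) / (\<integral>\<theta>. f \<theta> * l (x - \<theta>) \<partial>lborel)"

definition erfcx :: "real \<Rightarrow> real" where
  "erfcx y = exp (y^2) * (1 - 2 / sqrt pi * (LBINT t=0..y. exp (- (t^2))))"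

end

theory Submission
  imports Defs
begin


lemma deriv_integral_on:
  fixes F F' :: "real \<Rightarrow> real \<Rightarrow> real" and w :: "real \<Rightarrow> real"
  assumes S: "open S" "convex S" "x0 \<in> S"
    and intF: "\<And>x. x \<in> S \<Longrightarrow> integrable lborel (F x)"
    and measF': "F' x0 \<in> borel_measurable lborel"
    and intw: "integrable lborel w"
    and der: "\<And>x t. x \<in> S \<Longrightarrow> ((\<lambda>x. F x t) has_real_derivative F' x t) (at x)"
    and bnd: "\<And>x t. x \<in> S \<Longrightarrow> \<bar>F' x t\<bar> \<le> w t"
  shows "((\<lambda>x. \<integral>t. F x t \<partial>lborel) has_real_derivative (\<integral>t. F' x0 t \<partial>lborel)) (at x0)"
proof -
  have "((\<lambda>x. \<integral>t. F x t \<partial>lborel) has_real_derivative (\<integral>t. F' x0 t \<partial>lborel)) (at x0 within S)"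
  unfolding has_field_derivative_iff tendsto_at_iff_sequentially
  proof (intro allI impI)
    fix X :: "nat \<Rightarrow> real"
    assume X: "\<forall>i. X i \<in> S - {x0}" and lim: "X \<longlonglongrightarrow> x0"
    define s where "s i t = (F (X i) t - F x0 t) / (X i - x0)" for i t
    have eq: "((\<lambda>y. ((\<integral>t. F y t \<partial>lborel) - (\<integral>t. F x0 t \<partial>lborel)) / (y - x0)) \<circ> X) i
        = (\<integral>t. s i t \<partial>lborel)" for i
      unfolding s_def comp_def using intF X S by (simp add: Bochner_Integration.integral_diff)
    have "(\<lambda>i. \<integral>t. s i t \<partial>lborel) \<longlonglongrightarrow> (\<integral>t. F' x0 t \<partial>lborel)"
    proof (rule integral_dominated_convergence[where w=w])
      show "F' x0 \<in> borel_measurable lborel" by (rule measF')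
      show "s i \<in> borel_measurable lborel" for i
        unfolding s_def using intF X S by (intro borel_measurable_divide borel_measurable_diff) auto
      show "integrable lborel w" by (rule intw)
      show "AE t in lborel. (\<lambda>i. s i t) \<longlonglongrightarrow> F' x0 t"
      proof (rule AE_I2)
        fix t
        have "((\<lambda>y. (F y t - F x0 t) / (y - x0)) \<longlongrightarrow> F' x0 t) (at x0 within S)"
          using has_field_derivative_at_within[OF der[OF S(3)], of t S]
          unfolding has_field_derivative_iff .
        then show "(\<lambda>i. s i t) \<longlonglongrightarrow> F' x0 t"
          unfolding tendsto_at_iff_sequentially s_def comp_def using X lim by auto
      qed
      show "AE t in lborel. norm (s i t) \<le> w t" for i
      proof (rule AE_I2)
        fix t
        have "norm (F (X i) t - F x0 t) \<le> w t * norm (X i - x0)"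
        proof (rule field_differentiable_bound[where S=S and f'="\<lambda>x. F' x t"])
          show "convex S" using S by blast
          show "((\<lambda>x. F x t) has_field_derivative F' z t) (at z within S)" if "z \<in> S" for z
            using der[OF that] by (rule has_field_derivative_at_within)
          show "norm (F' z t) \<le> w t" if "z \<in> S" for z using bnd[OF that] by simp
          show "X i \<in> S" using X by blast
          show "x0 \<in> S" using S by blast
        qed
        moreover have "X i - x0 \<noteq> 0" using X by auto
        ultimately show "norm (s i t) \<le> w t"
          unfolding s_def by (simp add: divide_le_eq)
      qed
    qed
    then show "((\<lambda>y. ((\<integral>t. F y t \<partial>lborel) - (\<integral>t. F x0 t \<partial>lborel)) / (y - x0)) \<circ> X)
         \<longlonglongrightarrow> (\<integral>t. F' x0 t \<partial>lborel)"
      unfolding eq .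
  qed
  then show ?thesis by (subst (asm) at_within_open[OF S(3) S(1)])
qed

lemma cauchy_density_eq: "s > 0 \<Longrightarrow> cauchy_density 0 s v = s / (pi * (s\<^sup>2 + v\<^sup>2))"
proof -
  assume s: "s > 0"
  have "1 + ((v - 0) / s)\<^sup>2 = (s\<^sup>2 + v\<^sup>2) / s\<^sup>2" using s by (simp add: field_simps)
  then show ?thesis unfolding cauchy_density_def using s by (simp add: power2_eq_square)
qed

lemma cauchy_density_pos: "s > 0 \<Longrightarrow> cauchy_density 0 s v > 0"
  by (simp add: cauchy_density_eq add_pos_nonneg)

lemma cauchy_measurable[measurable]: "cauchy_density m s \<in> borel_measurable borel"
  unfolding cauchy_density_def[abs_def] by measurable

lemma integrable_cauchy:
  assumes s: "s > 0" shows "integrable lborel (cauchy_density 0 s)"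
proof -
  have "integrable lborel (\<lambda>x. inverse (1 + x^2) :: real)"
    using integrable_inverse_1_plus_square
    by (simp add: set_integrable_def einterval_eq_UNIV)
  from lborel_integrable_real_affine[OF this, of "1/s" 0] s
  have "integrable lborel (\<lambda>x. inverse (1 + (0 + 1/s * x)^2) :: real)" by simp
  then have "integrable lborel (\<lambda>x. (1 / (pi * s)) * inverse (1 + (0 + 1/s * x)^2) :: real)" by simp
  moreover have "cauchy_density 0 s = (\<lambda>x. (1 / (pi * s)) * inverse (1 + (0 + 1/s * x)^2))"
    by (rule ext) (simp add: cauchy_density_def inverse_eq_divide)
  ultimately show ?thesis by simp
qed

lemma integrable_bounded_times:
  assumes int: "integrable lborel l" and l: "\<And>v. l v \<ge> 0"
    and meas: "h \<in> borel_measurable lborel" and b: "\<And>v. \<bar>h v\<bar> \<le> K"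
  shows "integrable lborel (\<lambda>v. h v * l v :: real)"
proof (rule Bochner_Integration.integrable_bound[where f="\<lambda>v. K * l v"])
  show "integrable lborel (\<lambda>v. K * l v)" using int by simp
  show "(\<lambda>v. h v * l v) \<in> borel_measurable lborel" using meas int by measurable
  show "AE v in lborel. norm (h v * l v) \<le> norm (K * l v)"
  proof (rule AE_I2)
    fix v
    have "\<bar>h v\<bar> * l v \<le> K * l v" using b l by (simp add: mult_right_mono)
    moreover have "K \<ge> 0" using b[of v] by linarith
    ultimately show "norm (h v * l v) \<le> norm (K * l v)" using l[of v] by (simp add: abs_mult)
  qed
qed

lemma gauss_bound:
  fixes z \<sigma> :: real assumes "\<sigma> > 0"
  shows "z\<^sup>2 * exp (- z\<^sup>2 / (2 * \<sigma>\<^sup>2)) \<le> 2 * \<sigma>\<^sup>2"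
proof -
  define t where "t = z\<^sup>2 / (2 * \<sigma>\<^sup>2)"
  have t0: "t \<ge> 0" unfolding t_def by simp
  have z: "z\<^sup>2 = 2 * \<sigma>\<^sup>2 * t" unfolding t_def using assms by simp
  have "t \<le> exp t" using exp_ge_add_one_self[of t] by linarith
  then have "t * exp (-t) \<le> 1" by (simp add: exp_minus field_simps)
  then have "2 * \<sigma>\<^sup>2 * (t * exp (-t)) \<le> 2 * \<sigma>\<^sup>2" using assms by (simp add: mult_left_le)
  moreover have "z\<^sup>2 * exp (- z\<^sup>2 / (2 * \<sigma>\<^sup>2)) = 2 * \<sigma>\<^sup>2 * (t * exp (-t))"
    unfolding t_def using assms by (simp add: field_simps)
  ultimately show ?thesis by linarith
qed



lemma gauss_eq:
  fixes b u :: real assumes b: "b > 0"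
  shows "exp (- (b\<^sup>2 * u\<^sup>2)) = sqrt pi / b * normal_density 0 (1 / (b * sqrt 2)) u"
proof -
  have s: "sqrt (2 * pi * (1 / (b * sqrt 2))\<^sup>2) = sqrt pi / b"
    using b by (simp add: power_divide real_sqrt_divide real_sqrt_mult power_mult_distrib)
  have q0: "(b * sqrt 2)\<^sup>2 = 2 * b\<^sup>2" by (simp add: power_mult_distrib)
  have q: "(1 / (b * sqrt 2))\<^sup>2 = 1 / (2 * b\<^sup>2)"
    by (subst power_one_over) (simp only: q0)
  have e: "- (u - 0)\<^sup>2 / (2 * (1 / (b * sqrt 2))\<^sup>2) = - (b\<^sup>2 * u\<^sup>2)"
    unfolding q using b by simp
  show ?thesis unfolding normal_density_def s e using b by simp
qed

lemma gauss_integrable: "b > 0 \<Longrightarrow> integrable lborel (\<lambda>u. exp (- (b\<^sup>2 * u\<^sup>2)) :: real)"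
  by (subst gauss_eq) auto

lemma gauss_integral: "b > 0 \<Longrightarrow> (\<integral>u. exp (- (b\<^sup>2 * u\<^sup>2)) \<partial>lborel) = sqrt pi / b"
  by (subst gauss_eq) auto

definition G :: "real \<Rightarrow> real" where
  "G b = (\<integral>u. exp (- (b\<^sup>2 * u\<^sup>2)) / (1 + u\<^sup>2) \<partial>lborel)"

lemma G_integrable:
  fixes b :: real
  assumes b: "b > 0" shows "integrable lborel (\<lambda>u. exp (- (b\<^sup>2 * u\<^sup>2)) / (1 + u\<^sup>2))"
proof (rule Bochner_Integration.integrable_bound[OF gauss_integrable[OF b]])
  show "(\<lambda>u. exp (- (b\<^sup>2 * u\<^sup>2)) / (1 + u\<^sup>2)) \<in> borel_measurable lborel" by measurable
  show "AE x in lborel. norm (exp (- (b\<^sup>2 * x\<^sup>2)) / (1 + x\<^sup>2)) \<le> norm (exp (- (b\<^sup>2 * x\<^sup>2)))"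
    by (rule AE_I2) (simp add: divide_le_eq add_pos_nonneg)
qed

lemma G_bounds:
  fixes b :: real
  assumes b: "b > 0" shows "0 \<le> G b" "G b \<le> sqrt pi / b"
proof -
  show "0 \<le> G b" unfolding G_def by (rule integral_nonneg_AE) (simp add: add_pos_nonneg)
  have "G b \<le> (\<integral>u. exp (- (b\<^sup>2 * u\<^sup>2)) \<partial>lborel)"
    unfolding G_def
    by (rule integral_mono[OF G_integrable[OF b] gauss_integrable[OF b]])
       (simp add: divide_le_eq add_pos_nonneg)
  then show "G b \<le> sqrt pi / b" using gauss_integral[OF b] by simp
qed

lemma G_deriv:
  assumes b: "b > 0"
  shows "(G has_real_derivative (2 * b * G b - 2 * sqrt pi)) (at b)"
proof -
  define F' where "F' x u = - (2 * x * u\<^sup>2 * exp (- (x\<^sup>2 * u\<^sup>2)) / (1 + u\<^sup>2))" for x u :: real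
  have "((\<lambda>x. \<integral>u. exp (- (x\<^sup>2 * u\<^sup>2)) / (1 + u\<^sup>2) \<partial>lborel) has_real_derivative
         (\<integral>u. F' b u \<partial>lborel)) (at b)"
  proof (rule deriv_integral_on[where S="{b/2<..<2*b}" and w="\<lambda>u. 4 * b * exp (- ((b/2)\<^sup>2 * u\<^sup>2))"])
    show "open {b/2<..<2*b}" "convex {b/2<..<2*b}" by auto
    show "b \<in> {b/2<..<2*b}" using b by auto
    show "integrable lborel (\<lambda>u. exp (- (x\<^sup>2 * u\<^sup>2)) / (1 + u\<^sup>2))" if "x \<in> {b/2<..<2*b}" for x
      using that b by (intro G_integrable) auto
    show "F' b \<in> borel_measurable lborel" unfolding F'_def by measurable
    show "integrable lborel (\<lambda>u. 4 * b * exp (- ((b/2)\<^sup>2 * u\<^sup>2)))"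
      using gauss_integrable[of "b/2"] b by simp
    show "((\<lambda>x. exp (- (x\<^sup>2 * t\<^sup>2)) / (1 + t\<^sup>2)) has_real_derivative F' x t) (at x)" for x t
    proof -
      have nz: "1 + t\<^sup>2 \<noteq> 0" by (smt (verit) zero_le_power2)
      have d1: "((\<lambda>x. -(x\<^sup>2 * t\<^sup>2)) has_real_derivative -(2 * x * t\<^sup>2)) (at x)"
        by (auto intro!: derivative_eq_intros)
      have d2: "((\<lambda>x. exp (-(x\<^sup>2 * t\<^sup>2)) / (1 + t\<^sup>2)) has_real_derivative
                 exp (-(x\<^sup>2 * t\<^sup>2)) * (-(2 * x * t\<^sup>2)) / (1 + t\<^sup>2)) (at x)"
        by (rule DERIV_cdivide[OF DERIV_fun_exp[OF d1]])
      have pos: "1 + t\<^sup>2 > 0" by (smt (verit) zero_le_power2)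
      show ?thesis unfolding F'_def using d2 pos by (simp add: mult_ac)
    qed
    show "\<bar>F' x t\<bar> \<le> 4 * b * exp (- ((b/2)\<^sup>2 * t\<^sup>2))" if "x \<in> {b/2<..<2*b}" for x t
    proof -
      have x: "b/2 < x" "x < 2*b" using that by auto
      have pos: "1 + t\<^sup>2 > 0" by (smt (verit) zero_le_power2)
      have "t\<^sup>2 / (1 + t\<^sup>2) \<le> 1" using pos by (simp add: divide_le_eq)
      have e: "exp (- (x\<^sup>2 * t\<^sup>2)) \<le> exp (- ((b/2)\<^sup>2 * t\<^sup>2))"
      proof -
        have "(b/2)\<^sup>2 \<le> x\<^sup>2" using x b by (intro power_mono) auto
        then have "(b/2)\<^sup>2 * t\<^sup>2 \<le> x\<^sup>2 * t\<^sup>2" by (simp add: mult_right_mono)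
        then show ?thesis by simp
      qed
      have "\<bar>F' x t\<bar> = 2 * x * (t\<^sup>2 / (1 + t\<^sup>2)) * exp (- (x\<^sup>2 * t\<^sup>2))"
        unfolding F'_def using x b pos by (simp add: abs_mult abs_divide)
      also have "\<dots> \<le> 2 * (2 * b) * 1 * exp (- ((b/2)\<^sup>2 * t\<^sup>2))"
        using x b e \<open>t\<^sup>2 / (1 + t\<^sup>2) \<le> 1\<close>
        by (intro mult_mono) auto
      finally show ?thesis by simp
    qed
  qed
  moreover have "(\<integral>u. F' b u \<partial>lborel) = 2 * b * G b - 2 * sqrt pi"
  proof -
    define e1 where "e1 u = exp (- (b\<^sup>2 * u\<^sup>2)) / (1 + u\<^sup>2)" for u :: real
    define e2 where "e2 u = exp (- (b\<^sup>2 * u\<^sup>2))" for u :: real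
    have i1: "integrable lborel e1" unfolding e1_def[abs_def] using G_integrable[OF b] .
    have i2: "integrable lborel e2" unfolding e2_def[abs_def] using gauss_integrable[OF b] .
    have "F' b u = 2 * b * e1 u - 2 * b * e2 u" for u
    proof -
      have pos: "1 + u\<^sup>2 > 0" by (smt (verit) zero_le_power2)
      show ?thesis unfolding F'_def e1_def e2_def using pos by (simp add: field_simps)
    qed
    then have "(\<integral>u. F' b u \<partial>lborel) = (\<integral>u. 2 * b * e1 u - 2 * b * e2 u \<partial>lborel)" by simp
    also have "\<dots> = 2 * b * (\<integral>u. e1 u \<partial>lborel) - 2 * b * (\<integral>u. e2 u \<partial>lborel)"
      using i1 i2 by (simp add: Bochner_Integration.integral_diff)
    also have "\<dots> = 2 * b * G b - 2 * b * (sqrt pi / b)"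
      unfolding G_def e1_def e2_def gauss_integral[OF b] ..
    finally have "(\<integral>u. F' b u \<partial>lborel) = 2 * b * G b - 2 * b * (sqrt pi / b)" .
    then show ?thesis using b by simp
  qed
  ultimately show ?thesis unfolding G_def[abs_def] by simp
qed



definition E :: "real \<Rightarrow> real" where
  "E y = (LBINT t=0..y. exp (- (t^2)))"

lemma E_deriv:
  assumes y: "y > 0" shows "(E has_real_derivative exp (- (y^2))) (at y)"
proof -
  have c: "continuous_on {0..y+1} (\<lambda>t::real. exp (- (t^2)))"
    by (intro continuous_intros)
  have "((\<lambda>u. LBINT t=ereal 0..ereal u. exp (- (t^2))) has_vector_derivative exp (- (y^2))) (at y within {0..y+1})"
    using interval_integral_FTC2[of 0 0 "y+1" "\<lambda>t. exp (- (t^2))" y, OF _ _ c] y by simp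
  moreover have "at y within {0..y+1} = at y" using y by (intro at_within_Icc_at) auto
  ultimately have "((\<lambda>u. LBINT t=ereal 0..ereal u. exp (- (t^2))) has_real_derivative exp (- (y^2))) (at y)"
    by (simp add: has_real_derivative_iff_has_vector_derivative)
  then show ?thesis unfolding E_def[abs_def] by (simp add: zero_ereal_def)
qed

lemma E_lim: "(E \<longlongrightarrow> sqrt pi / 2) at_top"
proof -
  define f where "f t = indicator {0..} t *\<^sub>R exp (- (t^2))" for t :: real
  define s where "s y t = indicator {0..y} t *\<^sub>R exp (- (t^2))" for y t :: real
  have hb: "has_bochner_integral lborel f (sqrt pi / 2)"
    unfolding f_def using gaussian_moment_0 by simp
  have fi: "integrable lborel f" using integrable.intros[OF hb] .
  have fv: "(\<integral>t. f t \<partial>lborel) = sqrt pi / 2" using hb by (rule has_bochner_integral_integral_eq)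
  have "((\<lambda>y. \<integral>t. s y t \<partial>lborel) \<longlongrightarrow> (\<integral>t. f t \<partial>lborel)) at_top"
  proof (rule integral_dominated_convergence_at_top[where w=f])
    show "f \<in> borel_measurable lborel" unfolding f_def by measurable
    show "s y \<in> borel_measurable lborel" for y unfolding s_def by measurable
    show "integrable lborel f" by (rule fi)
    show "AE t in lborel. ((\<lambda>y. s y t) \<longlongrightarrow> f t) at_top"
    proof (rule AE_I2, rule tendsto_eventually)
      fix t :: real
      show "\<forall>\<^sub>F y in at_top. s y t = f t"
        unfolding eventually_at_top_linorder
        by (rule exI[of _ t]) (auto simp: s_def f_def indicator_def)
    qed
    show "\<forall>\<^sub>F y in at_top. AE t in lborel. norm (s y t) \<le> f t"
      by (rule always_eventually, intro allI AE_I2) (auto simp: s_def f_def indicator_def)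
  qed
  moreover have "\<forall>\<^sub>F y in at_top. (\<integral>t. s y t \<partial>lborel) = E y"
    unfolding eventually_at_top_linorder
  proof (intro exI[of _ 0] allI impI)
    fix y :: real assume "y \<ge> 0"
    then show "(\<integral>t. s y t \<partial>lborel) = E y"
      unfolding E_def s_def using interval_integral_Icc[of 0 y "\<lambda>t. exp (- (t^2))"]
      by (simp add: zero_ereal_def set_lebesgue_integral_def)
  qed
  ultimately show ?thesis using fv by (simp add: tendsto_cong)
qed

lemma G_erfcx:
  assumes y: "y > 0" shows "G y = pi * erfcx y"
proof -
  define P where "P z = exp (- (z^2)) * G z + 2 * sqrt pi * E z" for z
  have dP: "(P has_real_derivative 0) (at z)" if z: "z > 0" for z
  proof -
    show ?thesis unfolding P_def[abs_def]
      by (rule derivative_eq_intros G_deriv[OF z] E_deriv[OF z] refl)+ (simp add: algebra_simps)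
  qed
  have const: "P z = P y" if "z > y" for z
  proof -
    have "continuous_on {y..z} P"
    proof (intro continuous_at_imp_continuous_on ballI)
      fix x assume "x \<in> {y..z}"
      then have "x > 0" using y by auto
      then show "isCont P x" by (rule DERIV_isCont[OF dP])
    qed
    then show ?thesis
      using DERIV_isconst2[of y z P z] that dP y by auto
  qed
  have lim1: "((\<lambda>z. exp (- (z^2)) * G z) \<longlongrightarrow> 0) at_top"
  proof (rule tendsto_sandwich[where f="\<lambda>_. 0" and h="\<lambda>z. sqrt pi / z"])
    show "\<forall>\<^sub>F z in at_top. 0 \<le> exp (- (z^2)) * G z"
      unfolding eventually_at_top_linorder
    proof (intro exI[of _ 1] allI impI)
      fix z :: real assume "z \<ge> 1"
      then have z: "z > 0" by simp
      show "0 \<le> exp (- (z^2)) * G z" using G_bounds(1)[OF z] by simp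
    qed
    show "\<forall>\<^sub>F z in at_top. exp (- (z^2)) * G z \<le> sqrt pi / z"
      unfolding eventually_at_top_linorder
    proof (intro exI[of _ 1] allI impI)
      fix z :: real assume "z \<ge> 1"
      then have z: "z > 0" by simp
      have "exp (- (z^2)) \<le> 1" by simp
      then have "exp (- (z^2)) * G z \<le> 1 * G z" using G_bounds(1)[OF z] by (intro mult_right_mono) auto
      also have "\<dots> \<le> sqrt pi / z" using G_bounds(2)[OF z] by simp
      finally show "exp (- (z^2)) * G z \<le> sqrt pi / z" .
    qed
    show "((\<lambda>_. 0) \<longlongrightarrow> (0::real)) at_top" by simp
    show "((\<lambda>z. sqrt pi / z) \<longlongrightarrow> 0) at_top"
      by (intro tendsto_divide_0[OF tendsto_const] filterlim_at_top_imp_at_infinity filterlim_ident)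
  qed
  have "(P \<longlongrightarrow> 0 + 2 * sqrt pi * (sqrt pi / 2)) at_top"
    unfolding P_def[abs_def] by (intro tendsto_add lim1 tendsto_mult tendsto_const E_lim)
  then have limP: "(P \<longlongrightarrow> pi) at_top" by simp
  have ev: "\<forall>\<^sub>F z in at_top. P y = P z"
    unfolding eventually_at_top_linorder using const by (intro exI[of _ "y+1"]) auto
  have "((\<lambda>z::real. P y) \<longlongrightarrow> pi) at_top"
    by (rule iffD2[OF tendsto_cong[of "\<lambda>z. P y" P at_top pi, OF ev] limP])
  then have Py: "P y = pi" by (simp add: tendsto_const_iff)
  have "G y = exp (y^2) * (pi - 2 * sqrt pi * E y)"
    using Py unfolding P_def by (simp add: exp_minus field_simps)
  also have "\<dots> = pi * erfcx y"
    unfolding erfcx_def E_def[symmetric]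
    by (simp add: field_simps)
  finally show ?thesis .
qed



lemma integral_pos_lborel:
  fixes f :: "real \<Rightarrow> real"
  assumes i: "integrable lborel f" and p: "\<And>x. f x > 0"
  shows "(\<integral>x. f x \<partial>lborel) > 0"
proof -
  have nn: "(\<integral>x. f x \<partial>lborel) \<ge> 0" using p by (intro integral_nonneg_AE) (auto intro: less_imp_le)
  have "(\<integral>x. f x \<partial>lborel) \<noteq> 0"
  proof
    assume "(\<integral>x. f x \<partial>lborel) = 0"
    then have "AE x in lborel. f x = 0"
      using integral_nonneg_eq_0_iff_AE[OF i] p by (auto intro: less_imp_le)
    moreover have "\<And>x. f x \<noteq> 0" using p by (metis less_irrefl)
    ultimately have "AE x::real in lborel. False" by auto
    then have "ae_filter (lborel :: real measure) = bot" by (simp add: eventually_False)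
    then show False by (simp add: ae_filter_eq_bot_iff)
  qed
  with nn show ?thesis by simp
qed

lemma conv_deriv:
  fixes h h' l :: "real \<Rightarrow> real"
  assumes hm: "h \<in> borel_measurable borel" and hm': "h' \<in> borel_measurable borel"
    and hd: "\<And>y. (h has_real_derivative h' y) (at y)"
    and hb: "\<And>y. \<bar>h y\<bar> \<le> K" and hb': "\<And>y. \<bar>h' y\<bar> \<le> K'"
    and li: "integrable lborel l" and ln: "\<And>v. l v \<ge> 0"
  shows "\<And>x. integrable lborel (\<lambda>v. h (x - v) * l v)"
    and "((\<lambda>x. \<integral>v. h (x - v) * l v \<partial>lborel) has_real_derivative (\<integral>v. h' (x0 - v) * l v \<partial>lborel)) (at x0)"
proof -
  note [measurable] = hm hm'
  have lm[measurable]: "l \<in> borel_measurable lborel" using li by auto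
  show ii: "integrable lborel (\<lambda>v. h (x - v) * l v)" for x
    by (rule integrable_bounded_times[OF li ln _ hb]) measurable
  show "((\<lambda>x. \<integral>v. h (x - v) * l v \<partial>lborel) has_real_derivative (\<integral>v. h' (x0 - v) * l v \<partial>lborel)) (at x0)"
  proof (rule deriv_integral_on[where S=UNIV and w="\<lambda>v. K' * l v"])
    show "open (UNIV :: real set)" "convex (UNIV :: real set)" "x0 \<in> UNIV" by auto
    show "integrable lborel (\<lambda>v. h (x - v) * l v)" for x by (rule ii)
    show "(\<lambda>v. h' (x0 - v) * l v) \<in> borel_measurable lborel" by measurable
    show "integrable lborel (\<lambda>v. K' * l v)" using li by simp
    show "((\<lambda>x. h (x - t) * l t) has_real_derivative h' (x - t) * l t) (at x)" for x t
    proof -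
      have "((\<lambda>x. h (x - t)) has_real_derivative h' (x - t) * 1) (at x)"
        by (rule DERIV_chain2[OF hd]) (auto intro!: derivative_eq_intros)
      then show ?thesis using DERIV_mult[OF _ DERIV_const, of "\<lambda>x. h (x - t)" _ x UNIV "l t"] by simp
    qed
    show "\<bar>h' (x - t) * l t\<bar> \<le> K' * l t" for x t
      using hb'[of "x - t"] ln[of t] by (simp add: abs_mult mult_right_mono)
  qed
qed



lemma final_alg:
  fixes \<sigma> s A Ef :: real
  assumes \<sigma>: "\<sigma> > 0" and s: "s > 0" and Ef: "Ef > 0"
    and A: "A = (1 / sqrt (2 * pi * \<sigma>\<^sup>2)) / s * (pi * Ef)"
  shows "((s/pi) * A - (1/\<sigma>\<^sup>2) * ((s/pi) * (1 - s\<^sup>2 * A))) / ((s/pi) * A)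
        = 1 + (s/\<sigma>)^2 - sqrt (2/pi) * (s/\<sigma>) / Ef"
proof -
  have r1: "sqrt (2 * pi * \<sigma>\<^sup>2) = sqrt (2 * pi) * \<sigma>" using \<sigma> by (simp add: real_sqrt_mult)
  have r2: "sqrt (2 / pi) = sqrt (2 * pi) / pi"
  proof -
    have "2 / pi = (2 * pi) / pi\<^sup>2" by (simp add: power2_eq_square)
    then show ?thesis by (simp add: real_sqrt_divide)
  qed
  have sp: "sqrt (2 * pi) > 0" by simp
  have A': "A = pi * Ef / (sqrt (2 * pi) * \<sigma> * s)" using A r1 by simp
  have Apos: "A > 0" unfolding A' using \<sigma> s Ef sp by simp
  have "((s/pi) * A - (1/\<sigma>\<^sup>2) * ((s/pi) * (1 - s\<^sup>2 * A))) / ((s/pi) * A)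
        = 1 + (s/\<sigma>)^2 - 1 / (\<sigma>\<^sup>2 * A)"
    using Apos s \<sigma> by (simp add: field_simps)
  also have "1 / (\<sigma>\<^sup>2 * A) = sqrt (2/pi) * (s/\<sigma>) / Ef"
    unfolding A' r2 using \<sigma> s Ef sp by (simp add: field_simps power2_eq_square)
  finally show ?thesis .
qed



lemma nd_deriv:
  assumes \<sigma>: "\<sigma> > 0"
  shows "(normal_density m \<sigma> has_real_derivative (- ((y - m) / \<sigma>\<^sup>2) * normal_density m \<sigma> y)) (at y)"
proof -
  have "((\<lambda>y. 1 / sqrt (2 * pi * \<sigma>\<^sup>2) * exp (- (y - m)\<^sup>2 / (2 * \<sigma>\<^sup>2))) has_real_derivative
      1 / sqrt (2 * pi * \<sigma>\<^sup>2) * (exp (- (y - m)\<^sup>2 / (2 * \<sigma>\<^sup>2)) * (- (2 * (y - m)) / (2 * \<sigma>\<^sup>2)))) (at y)"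
  proof (intro DERIV_cmult DERIV_fun_exp)
    show "((\<lambda>y. - (y - m)\<^sup>2 / (2 * \<sigma>\<^sup>2)) has_real_derivative - (2 * (y - m)) / (2 * \<sigma>\<^sup>2)) (at y)"
      using \<sigma> by (auto intro!: derivative_eq_intros simp: field_simps power2_eq_square)
  qed
  moreover have "1 / sqrt (2 * pi * \<sigma>\<^sup>2) * (exp (- (y - m)\<^sup>2 / (2 * \<sigma>\<^sup>2)) * (- (2 * (y - m)) / (2 * \<sigma>\<^sup>2)))
     = - ((y - m) / \<sigma>\<^sup>2) * normal_density m \<sigma> y"
    unfolding normal_density_def using \<sigma> by (simp add: field_simps)
  ultimately show ?thesis unfolding normal_density_def[abs_def] by simp
qed

lemma ndq_deriv:
  assumes \<sigma>: "\<sigma> > 0"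
  shows "((\<lambda>y. (y - m) * normal_density m \<sigma> y) has_real_derivative
          (normal_density m \<sigma> y - (y - m)\<^sup>2 / \<sigma>\<^sup>2 * normal_density m \<sigma> y)) (at y)"
proof -
  have "((\<lambda>y. (y - m) * normal_density m \<sigma> y) has_real_derivative
     1 * normal_density m \<sigma> y + (- ((y - m) / \<sigma>\<^sup>2) * normal_density m \<sigma> y) * (y - m)) (at y)"
    by (intro DERIV_mult nd_deriv[OF \<sigma>]) (auto intro!: derivative_eq_intros)
  then show ?thesis by (simp add: power2_eq_square algebra_simps)
qed

lemma nd_le: "\<sigma> > 0 \<Longrightarrow> normal_density m \<sigma> y \<le> 1 / sqrt (2 * pi * \<sigma>\<^sup>2)"
  unfolding normal_density_def by (simp add: divide_le_eq)

lemma nd_eq: "normal_density m \<sigma> y = 1 / sqrt (2 * pi * \<sigma>\<^sup>2) * exp (- (y - m)\<^sup>2 / (2 * \<sigma>\<^sup>2))"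
  unfolding normal_density_def ..

lemma nd_sq:
  assumes \<sigma>: "\<sigma> > 0"
  shows "(y - m)\<^sup>2 * normal_density m \<sigma> y \<le> 2 * \<sigma>\<^sup>2 * (1 / sqrt (2 * pi * \<sigma>\<^sup>2))"
proof -
  have "(y - m)\<^sup>2 * normal_density m \<sigma> y
      = 1 / sqrt (2 * pi * \<sigma>\<^sup>2) * ((y - m)\<^sup>2 * exp (- (y - m)\<^sup>2 / (2 * \<sigma>\<^sup>2)))"
    unfolding nd_eq by (simp add: ac_simps)
  also have "\<dots> \<le> 1 / sqrt (2 * pi * \<sigma>\<^sup>2) * (2 * \<sigma>\<^sup>2)"
    by (intro mult_left_mono gauss_bound \<sigma>) simp
  finally show ?thesis by (simp add: ac_simps)
qed

lemma nd_abs: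
  assumes \<sigma>: "\<sigma> > 0"
  shows "\<bar>y - m\<bar> * normal_density m \<sigma> y \<le> (1 + 2 * \<sigma>\<^sup>2) * (1 / sqrt (2 * pi * \<sigma>\<^sup>2))"
proof -
  have h: "0 \<le> (\<bar>y - m\<bar> - 1)\<^sup>2" by simp
  have h2: "(\<bar>y - m\<bar> - 1)\<^sup>2 = (y - m)\<^sup>2 - 2 * \<bar>y - m\<bar> + 1"
    by (simp add: power2_diff power2_abs)
  have h3: "0 \<le> (y - m)\<^sup>2" by simp
  have "\<bar>y - m\<bar> \<le> 1 + (y - m)\<^sup>2" using h h2 h3 by (smt (verit))
  then have "\<bar>y - m\<bar> * normal_density m \<sigma> y \<le> (1 + (y - m)\<^sup>2) * normal_density m \<sigma> y"
    by (intro mult_right_mono) auto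
  also have "\<dots> = normal_density m \<sigma> y + (y - m)\<^sup>2 * normal_density m \<sigma> y" by (simp add: algebra_simps)
  also have "\<dots> \<le> 1 / sqrt (2 * pi * \<sigma>\<^sup>2) + 2 * \<sigma>\<^sup>2 * (1 / sqrt (2 * pi * \<sigma>\<^sup>2))"
    using nd_le[OF \<sigma>] nd_sq[OF \<sigma>] by (intro add_mono) auto
  also have "\<dots> = (1 + 2 * \<sigma>\<^sup>2) * (1 / sqrt (2 * pi * \<sigma>\<^sup>2))" by (simp add: add_divide_distrib)
  finally show ?thesis .
qed



theorem mainTheorem6:
  fixes \<sigma>\<^sub>0 \<sigma>\<^sub>\<epsilon> \<theta>\<^sub>0 :: real
  assumes "\<sigma>\<^sub>0 > 0" and "\<sigma>\<^sub>\<epsilon> > 0"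
  shows "(posterior_mean (normal_density \<theta>\<^sub>0 \<sigma>\<^sub>0) (cauchy_density 0 \<sigma>\<^sub>\<epsilon>)
            has_real_derivative
            (1 + (\<sigma>\<^sub>\<epsilon> / \<sigma>\<^sub>0)^2
               - sqrt (2 / pi) * (\<sigma>\<^sub>\<epsilon> / \<sigma>\<^sub>0) / erfcx ((\<sigma>\<^sub>\<epsilon> / \<sigma>\<^sub>0) / sqrt 2)))
         (at \<theta>\<^sub>0)"
proof -
  define \<sigma> where "\<sigma> = \<sigma>\<^sub>0"
  define s where "s = \<sigma>\<^sub>\<epsilon>"
  define m where "m = \<theta>\<^sub>0"
  have \<sigma>: "\<sigma> > 0" and s: "s > 0" using assms by (simp_all add: \<sigma>_def s_def)
  define p where "p = normal_density m \<sigma>"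
  define l where "l = cauchy_density 0 s"
  define c0 where "c0 = 1 / sqrt (2 * pi * \<sigma>\<^sup>2)"
  define q where "q y = (y - m) * p y" for y
  define dp where "dp y = - ((y - m) / \<sigma>\<^sup>2) * p y" for y
  define dq where "dq y = p y - (y - m)\<^sup>2 / \<sigma>\<^sup>2 * p y" for y
  have c0pos: "c0 > 0" unfolding c0_def using \<sigma> by simp
  have li: "integrable lborel l" unfolding l_def by (rule integrable_cauchy[OF s])
  have lpos: "l v > 0" for v unfolding l_def by (rule cauchy_density_pos[OF s])
  have ln: "l v \<ge> 0" for v using lpos[of v] by simp
  have ppos: "p y > 0" for y unfolding p_def using \<sigma> by (rule normal_density_pos)
  have pm[measurable]: "p \<in> borel_measurable borel" unfolding p_def by simp
  have dpm: "dp \<in> borel_measurable borel" unfolding dp_def[abs_def] by measurable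
  have qm: "q \<in> borel_measurable borel" unfolding q_def[abs_def] by measurable
  have dqm: "dq \<in> borel_measurable borel" unfolding dq_def[abs_def] by measurable
  have pd: "(p has_real_derivative dp y) (at y)" for y
    unfolding p_def dp_def using nd_deriv[OF \<sigma>] by simp
  have qd: "(q has_real_derivative dq y) (at y)" for y
    unfolding q_def[abs_def] dq_def p_def using ndq_deriv[OF \<sigma>] by simp
  have pb: "\<bar>p y\<bar> \<le> c0" for y
    using nd_le[OF \<sigma>] ppos[of y] unfolding p_def c0_def by simp
  have ab: "\<bar>y - m\<bar> * p y \<le> (1 + 2 * \<sigma>\<^sup>2) * c0" for y
    using nd_abs[OF \<sigma>] unfolding p_def c0_def by simp
  have sqb: "(y - m)\<^sup>2 * p y \<le> 2 * \<sigma>\<^sup>2 * c0" for y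
    using nd_sq[OF \<sigma>] unfolding p_def c0_def by simp
  have dpb: "\<bar>dp y\<bar> \<le> (1 + 2 * \<sigma>\<^sup>2) * c0 / \<sigma>\<^sup>2" for y
  proof -
    have "\<bar>dp y\<bar> = \<bar>y - m\<bar> * p y / \<sigma>\<^sup>2"
      unfolding dp_def using ppos[of y] \<sigma> by (simp add: abs_mult abs_divide)
    also have "\<dots> \<le> (1 + 2 * \<sigma>\<^sup>2) * c0 / \<sigma>\<^sup>2"
      using ab[of y] \<sigma> by (intro divide_right_mono) auto
    finally show ?thesis .
  qed
  have qb: "\<bar>q y\<bar> \<le> (1 + 2 * \<sigma>\<^sup>2) * c0" for y
    unfolding q_def using ab[of y] ppos[of y] by (simp add: abs_mult)
  have dqb: "\<bar>dq y\<bar> \<le> 3 * c0" for y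
  proof -
    have "\<bar>dq y\<bar> \<le> \<bar>p y\<bar> + \<bar>(y - m)\<^sup>2 / \<sigma>\<^sup>2 * p y\<bar>"
      unfolding dq_def by (rule abs_triangle_ineq4)
    also have "\<bar>(y - m)\<^sup>2 / \<sigma>\<^sup>2 * p y\<bar> = (y - m)\<^sup>2 * p y / \<sigma>\<^sup>2"
      using ppos[of y] \<sigma> by (simp add: abs_mult)
    also have "\<dots> \<le> 2 * \<sigma>\<^sup>2 * c0 / \<sigma>\<^sup>2"
      using sqb[of y] \<sigma> by (intro divide_right_mono) auto
    also have "\<dots> = 2 * c0" using \<sigma> by simp
    finally show ?thesis using pb[of y] by linarith
  qed
  note P = conv_deriv[OF pm dpm pd pb dpb li ln]
  note Q = conv_deriv[OF qm dqm qd qb dqb li ln]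
  define Dn where "Dn x = (\<integral>v. p (x - v) * l v \<partial>lborel)" for x
  define Rq where "Rq x = (\<integral>v. q (x - v) * l v \<partial>lborel)" for x
  have DD: "(Dn has_real_derivative (\<integral>v. dp (m - v) * l v \<partial>lborel)) (at m)"
    unfolding Dn_def[abs_def] by (rule P(2))
  have DR: "(Rq has_real_derivative (\<integral>v. dq (m - v) * l v \<partial>lborel)) (at m)"
    unfolding Rq_def[abs_def] by (rule Q(2))
  have post: "posterior_mean p l = (\<lambda>x. (m * Dn x + Rq x) / Dn x)"
  proof
    fix x
    have num: "(\<integral>\<theta>. \<theta> * p \<theta> * l (x - \<theta>) \<partial>lborel) = m * Dn x + Rq x"
    proof -
      have "(\<integral>\<theta>. \<theta> * p \<theta> * l (x - \<theta>) \<partial>lborel)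
          = (\<integral>v. (x + -1 * v) * p (x + -1 * v) * l (x - (x + -1 * v)) \<partial>lborel)"
        using lborel_integral_real_affine[of "-1" "\<lambda>\<theta>. \<theta> * p \<theta> * l (x - \<theta>)" x] by simp
      also have "\<dots> = (\<integral>v. m * (p (x - v) * l v) + q (x - v) * l v \<partial>lborel)"
        by (rule Bochner_Integration.integral_cong) (simp_all add: q_def algebra_simps)
      also have "\<dots> = m * Dn x + Rq x"
        using P(1)[of x] Q(1)[of x] unfolding Dn_def Rq_def
        by (simp add: Bochner_Integration.integral_add)
      finally show ?thesis .
    qed
    have den: "(\<integral>\<theta>. p \<theta> * l (x - \<theta>) \<partial>lborel) = Dn x"
    proof -
      have "(\<integral>\<theta>. p \<theta> * l (x - \<theta>) \<partial>lborel)
          = (\<integral>v. p (x + -1 * v) * l (x - (x + -1 * v)) \<partial>lborel)"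
        using lborel_integral_real_affine[of "-1" "\<lambda>\<theta>. p \<theta> * l (x - \<theta>)" x] by simp
      then show ?thesis unfolding Dn_def by simp
    qed
    show "posterior_mean p l x = (m * Dn x + Rq x) / Dn x"
      unfolding posterior_mean_def num den ..
  qed
  define n where "n = normal_density 0 \<sigma>"
  have pn: "p (m - v) = n v" for v
    unfolding p_def n_def normal_density_def by (simp add: power2_commute)
  have pn2: "p (m + v) = n v" for v
    unfolding p_def n_def normal_density_def by simp
  have lsym: "l (- v) = l v" for v
    unfolding l_def cauchy_density_def by simp
  have Dpos: "Dn m > 0"
    unfolding Dn_def using P(1)[of m] ppos lpos by (intro integral_pos_lborel) auto
  have R0: "Rq m = 0"
  proof -
    define k where "k v = q (m - v) * l v" for v
    have "(\<integral>v. k v \<partial>lborel) = \<bar>-1\<bar> *\<^sub>R (\<integral>v. k (0 + -1 * v) \<partial>lborel)"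
      by (rule lborel_integral_real_affine) simp
    also have "\<dots> = (\<integral>v. - k v \<partial>lborel)"
      by (simp add: k_def q_def pn pn2 lsym)
    also have "\<dots> = - (\<integral>v. k v \<partial>lborel)" by simp
    finally have "(\<integral>v. k v \<partial>lborel) = 0" by simp
    then show ?thesis unfolding Rq_def k_def .
  qed
  define D' where "D' = (\<integral>v. dp (m - v) * l v \<partial>lborel)"
  define R' where "R' = (\<integral>v. dq (m - v) * l v \<partial>lborel)"
  have "(posterior_mean p l has_real_derivative
        ((m * D' + R') * Dn m - (m * Dn m + Rq m) * D') / (Dn m * Dn m)) (at m)"
    unfolding post D'_def R'_def
    by (intro DERIV_divide DERIV_add DERIV_cmult DD DR) (use Dpos in simp)
  moreover have "((m * D' + R') * Dn m - (m * Dn m + Rq m) * D') / (Dn m * Dn m) = R' / Dn m"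
    using Dpos R0 by (simp add: field_simps)
  ultimately have deriv: "(posterior_mean p l has_real_derivative R' / Dn m) (at m)" by simp
  have nm[measurable]: "n \<in> borel_measurable borel" unfolding n_def by simp
  have ni: "integrable lborel n" unfolding n_def by (rule integrable_normal_density[OF \<sigma>])
  have nn: "n v \<ge> 0" for v unfolding n_def by simp
  have npos: "n v > 0" for v unfolding n_def using \<sigma> by (rule normal_density_pos)
  have sv: "s\<^sup>2 + v\<^sup>2 > 0" for v using s by (simp add: add_pos_nonneg)
  have svne: "s\<^sup>2 + v\<^sup>2 \<noteq> 0" for v using sv[of v] by linarith
  define fA where "fA v = (1 / (s\<^sup>2 + v\<^sup>2)) * n v" for v
  define fB where "fB v = (v\<^sup>2 / (s\<^sup>2 + v\<^sup>2)) * n v" for v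
  have iA: "integrable lborel fA" unfolding fA_def[abs_def]
  proof (rule integrable_bounded_times[OF ni nn, where K="1 / s\<^sup>2"])
    show "(\<lambda>v. 1 / (s\<^sup>2 + v\<^sup>2)) \<in> borel_measurable lborel" by measurable
    show "\<bar>1 / (s\<^sup>2 + v\<^sup>2)\<bar> \<le> 1 / s\<^sup>2" for v
      using sv[of v] s by (simp add: frac_le)
  qed
  have iB: "integrable lborel fB" unfolding fB_def[abs_def]
  proof (rule integrable_bounded_times[OF ni nn, where K=1])
    show "(\<lambda>v. v\<^sup>2 / (s\<^sup>2 + v\<^sup>2)) \<in> borel_measurable lborel" by measurable
    show "\<bar>v\<^sup>2 / (s\<^sup>2 + v\<^sup>2)\<bar> \<le> 1" for v
      using sv[of v] s by (simp add: divide_le_eq)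
  qed
  define A where "A = (\<integral>v. fA v \<partial>lborel)"
  have Apos: "A > 0" unfolding A_def fA_def
    using iA npos sv unfolding fA_def[abs_def] by (intro integral_pos_lborel) auto
  have B2: "(\<integral>v. fB v \<partial>lborel) = 1 - s\<^sup>2 * A"
  proof -
    have "fB v = n v - s\<^sup>2 * fA v" for v
      unfolding fB_def fA_def using svne[of v] by (simp add: divide_simps) (simp add: algebra_simps)
    then have "(\<integral>v. fB v \<partial>lborel) = (\<integral>v. n v - s\<^sup>2 * fA v \<partial>lborel)" by simp
    also have "\<dots> = (\<integral>v. n v \<partial>lborel) - s\<^sup>2 * A"
      unfolding A_def using ni iA by (simp add: Bochner_Integration.integral_diff)
    also have "(\<integral>v. n v \<partial>lborel) = 1" unfolding n_def by (rule integral_normal_density[OF \<sigma>])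
    finally show ?thesis .
  qed
  have lform: "l v = (s / pi) * (1 / (s\<^sup>2 + v\<^sup>2))" for v
    unfolding l_def using cauchy_density_eq[OF s] by simp
  have DnA: "Dn m = (s / pi) * A"
  proof -
    have "p (m - v) * l v = (s / pi) * fA v" for v
      unfolding pn lform fA_def by simp
    then have "Dn m = (\<integral>v. (s / pi) * fA v \<partial>lborel)" unfolding Dn_def by simp
    then show ?thesis unfolding A_def by simp
  qed
  have RA: "R' = (s / pi) * A - (1 / \<sigma>\<^sup>2) * ((s / pi) * (1 - s\<^sup>2 * A))"
  proof -
    have "dq (m - v) * l v = (s / pi) * fA v - (1 / \<sigma>\<^sup>2) * (s / pi) * fB v" for v
      unfolding dq_def pn lform fA_def fB_def
      by (simp add: divide_inverse algebra_simps)
    then have "R' = (\<integral>v. (s / pi) * fA v - (1 / \<sigma>\<^sup>2) * (s / pi) * fB v \<partial>lborel)"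
      unfolding R'_def by simp
    also have "\<dots> = (s / pi) * A - (1 / \<sigma>\<^sup>2) * (s / pi) * (\<integral>v. fB v \<partial>lborel)"
      unfolding A_def using iA iB by (simp add: Bochner_Integration.integral_diff)
    finally show ?thesis unfolding B2 by simp
  qed
  define b where "b = (s / \<sigma>) / sqrt 2"
  have bpos: "b > 0" unfolding b_def using s \<sigma> by simp
  have AG: "A = c0 / s * G b"
  proof -
    have bsq: "b\<^sup>2 = s\<^sup>2 / (2 * \<sigma>\<^sup>2)" unfolding b_def by (simp add: power_divide power_mult_distrib)
    have fAsu: "fA (s * u) = c0 / s\<^sup>2 * (exp (- (b\<^sup>2 * u\<^sup>2)) / (1 + u\<^sup>2))" for u
    proof -
      have e: "- (s * u - 0)\<^sup>2 / (2 * \<sigma>\<^sup>2) = - (b\<^sup>2 * u\<^sup>2)"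
        unfolding bsq using \<sigma> by (simp add: power_mult_distrib field_simps)
      have d: "s\<^sup>2 + (s * u)\<^sup>2 = s\<^sup>2 * (1 + u\<^sup>2)" by (simp add: power_mult_distrib algebra_simps)
      show ?thesis unfolding fA_def n_def normal_density_def c0_def e d
        by (simp add: field_simps)
    qed
    have "A = \<bar>s\<bar> *\<^sub>R (\<integral>u. fA (0 + s * u) \<partial>lborel)"
      unfolding A_def using lborel_integral_real_affine[of s fA 0] s by simp
    also have "\<dots> = \<bar>s\<bar> *\<^sub>R (\<integral>u. c0 / s\<^sup>2 * (exp (- (b\<^sup>2 * u\<^sup>2)) / (1 + u\<^sup>2)) \<partial>lborel)"
      by (simp only: add_0_left fAsu)
    also have "\<dots> = s * (c0 / s\<^sup>2) * G b" unfolding G_def integral_mult_right_zero using s by simp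
    also have "\<dots> = c0 / s * G b" using s by (simp add: power2_eq_square)
    finally show ?thesis .
  qed
  have Aerf: "A = (1 / sqrt (2 * pi * \<sigma>\<^sup>2)) / s * (pi * erfcx b)"
    unfolding AG G_erfcx[OF bpos] c0_def ..
  have Efpos: "erfcx b > 0"
  proof -
    have "0 < A" by (rule Apos)
    moreover have "sqrt (2 * pi * \<sigma>\<^sup>2) * s > 0" using \<sigma> s by simp
    ultimately have "0 < pi * erfcx b" unfolding Aerf
      by (simp add: zero_less_divide_iff)
    then show ?thesis by (simp add: zero_less_mult_iff)
  qed
  have val: "R' / Dn m = 1 + (s/\<sigma>)^2 - sqrt (2/pi) * (s/\<sigma>) / erfcx b"
    unfolding RA DnA by (rule final_alg[OF \<sigma> s Efpos Aerf])
  have fin: "(posterior_mean p l has_real_derivative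
      (1 + (s/\<sigma>)^2 - sqrt (2/pi) * (s/\<sigma>) / erfcx ((s / \<sigma>) / sqrt 2))) (at m)"
    using deriv unfolding val b_def .
  then show ?thesis unfolding p_def l_def \<sigma>_def s_def m_def .
qed

end
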